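(* Let $d\in\mathbb{N}$, $a\in\mathbb{R}$, $b\in(a,\infty)$. For every $v=(v_1,\dots,v_{d+1})\in\mathbb{R}^{d+1}$ let $I^v=\{x\in[a,b]^d\colon v_{d+1}+\sum_{i=1}^d v_ix_i>0\}$. Let $\lambda_d$ denote the Lebesgue measure on $\mathbb{R}^d$, let $p\colon[a,b]^d\to[0,\infty)$ be bounded and measurable, and let $u\in\mathbb{R}^{d+1}\setminus\{0\}$. Then there exist $\varepsilon,C\in(0,\infty)$ such that for all $v,w\in\mathbb{R}^{d+1}$ with $\max\{\|u-v\|,\|u-w\|\}\le\varepsilon$ it holds that $$\int_{I^v\,\Delta\, I^w}p(x)\,\lambda_d(\mathrm{d}x)\le C\|v-w\|,$$ where $\Delta$ denotes the symmetric difference of sets.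
   Context: $\|\cdot\|$ denotes the Euclidean norm. *)

theory Defs
  imports "HOL-Analysis.Analysis"
begin

definition cube :: "real \<Rightarrow> real \<Rightarrow> (real ^ 'n) set" where
  "cube a b = cbox (\<chi> i. a) (\<chi> i. b)"

text \<open>A vector v in R^(d+1) is represented as a pair (v_1..v_d, v_(d+1)).
  The norm on the product type is the Euclidean norm.
  I^v = {x in [a,b]^d. v_(d+1) + sum_i v_i x_i > 0}.\<close>
definition Iset :: "real \<Rightarrow> real \<Rightarrow> (real ^ 'n) \<times> real \<Rightarrow> (real ^ 'n) set" where
  "Iset a b v = {x \<in> cube a b. snd v + (\<Sum>i\<in>UNIV. fst v $ i * x $ i) > 0}"

definition symdiff :: "'a set \<Rightarrow> 'a set \<Rightarrow> 'a set" where
  "symdiff A B = (A - B) \<union> (B - A)"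

end

theory Submission imports Defs begin

lemma cube_measure: "a \<le> b \<Longrightarrow> measure lebesgue (cbox (\<chi> i. (a::real)) (\<chi> i. b) :: (real^'n) set) = (b - a)^CARD('n)"
  by (simp add: content_cbox_cart mem_box_cart interval_ne_empty_cart)

lemma inner_shift: "inner (v::real^'n) (x + r *\<^sub>R axis j 1) = inner v x + r * v$j"
  by (simp add: inner_add_right inner_axis)

lemma slab_lmeasurable:
  fixes v :: "real^'n"
  shows "{x \<in> cube a b. \<bar>v0 + inner v x\<bar> \<le> t} \<in> lmeasurable"
proof -
  have "closed {x::real^'n. \<bar>v0 + inner v x\<bar> \<le> t}"
    by (rule closed_Collect_le) (auto intro!: continuous_intros)
  hence "compact (cube a b \<inter> {x::real^'n. \<bar>v0 + inner v x\<bar> \<le> t})"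
    unfolding cube_def by (intro compact_Int_closed compact_cbox)
  hence "compact {x \<in> cube a b. \<bar>v0 + inner v x\<bar> \<le> t}"
    by (simp add: Collect_conj_eq)
  thus ?thesis by (rule lmeasurable_compact)
qed

lemma slab_measure:
  fixes v :: "real^'n" and v0 t c :: real
  assumes c: "c > 0" "\<bar>v$j\<bar> \<ge> c" and t: "t > 0" and ab: "a \<le> b"
  shows "measure lebesgue {x \<in> cube a b. \<bar>v0 + inner v x\<bar> \<le> t} \<le> (b+1-a)^CARD('n) * (3*t/c)"
proof -
  define S where "S = {x \<in> cube a b. \<bar>v0 + inner v x\<bar> \<le> t}"
  define h where "h = 3*t/c"
  have hpos: "h > 0" using c t by (simp add: h_def)
  have hc: "h * c = 3*t" using c by (simp add: h_def)
  have hv: "h * \<bar>v$j\<bar> \<ge> 3*t" using mult_left_mono[OF c(2), of h] hpos hc by simp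
  define N where "N = nat \<lfloor>1/h\<rfloor>"
  have fl: "real N = of_int \<lfloor>1/h\<rfloor>" unfolding N_def using hpos by simp
  have "real N \<le> 1/h" using fl by simp
  hence Nh: "real N * h \<le> 1" using hpos by (simp add: field_simps)
  have N1: "1/h \<le> real N + 1" using fl real_of_int_floor_add_one_gt[of "1/h"] by simp
  have Sm: "S \<in> lmeasurable" unfolding S_def by (rule slab_lmeasurable)
  define T where "T k = (+) ((real k * h) *\<^sub>R axis j 1) ` S" for k
  have Tm: "T k \<in> lmeasurable" for k unfolding T_def by (rule measurable_translation[OF Sm])
  have Tmeas: "measure lebesgue (T k) = measure lebesgue S" for k unfolding T_def by (rule measure_translation)
  define B where "B = (cbox (\<chi> i. a) (\<chi> i. b+1) :: (real^'n) set)"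
  have TB: "T k \<subseteq> B" if "k \<le> N" for k
  proof
    fix y assume "y \<in> T k"
    then obtain s where s: "s \<in> S" and y: "y = (real k * h) *\<^sub>R axis j 1 + s" unfolding T_def by auto
    have kh: "0 \<le> real k * h" "real k * h \<le> 1"
    proof -
      have "real k \<le> real N" using that by simp
      hence "real k * h \<le> real N * h" using hpos by (simp add: mult_right_mono)
      hence kN: "real k * h \<le> real N * h" .
      show "0 \<le> real k * h" using hpos by simp
      show "real k * h \<le> 1" using kN Nh by linarith
    qed
    from s have "\<forall>i. a \<le> s$i \<and> s$i \<le> b" unfolding S_def cube_def by (simp add: mem_box_cart)
    hence sab: "a \<le> s$i" "s$i \<le> b" for i by auto
    show "y \<in> B" unfolding B_def mem_box_cart
    proof
      fix i
      show "(\<chi> i. a) $ i \<le> y $ i \<and> y $ i \<le> (\<chi> i. b + 1) $ i"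
        using sab[of i] kh by (cases "i = j") (simp_all add: y axis_def)
    qed
  qed
  have disj: "disjoint_family_on T {..N}"
    unfolding disjoint_family_on_def
  proof (intro ballI impI)
    fix k l assume kl: "k \<in> {..N}" "l \<in> {..N}" "k \<noteq> l"
    show "T k \<inter> T l = {}"
    proof (rule ccontr)
      assume "T k \<inter> T l \<noteq> {}"
      then obtain s1 s2 where s1: "s1 \<in> S" and s2: "s2 \<in> S"
        and eq: "(real k * h) *\<^sub>R axis j 1 + s1 = (real l * h) *\<^sub>R axis j 1 + s2" unfolding T_def by auto
      have "inner v (s1 + (real k * h) *\<^sub>R axis j 1) = inner v (s2 + (real l * h) *\<^sub>R axis j 1)"
        using eq by (simp add: add.commute)
      hence e: "inner v s1 + real k * h * v$j = inner v s2 + real l * h * v$j" by (simp add: inner_shift)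
      have b1: "\<bar>v0 + inner v s1\<bar> \<le> t" "\<bar>v0 + inner v s2\<bar> \<le> t" using s1 s2 unfolding S_def by auto
      have e': "inner v s1 + real k * (h * v$j) = inner v s2 + real l * (h * v$j)" using e by (simp add: mult.assoc)
      have d: "(real k - real l) * (h * v$j) = (v0 + inner v s2) - (v0 + inner v s1)"
        by (simp only: left_diff_distrib) (use e' in linarith)
      have "\<bar>(real k - real l) * (h * v$j)\<bar> \<le> 2*t" unfolding d using b1 by linarith
      moreover have "\<bar>real k - real l\<bar> \<ge> 1" using kl(3) by linarith
      hence "\<bar>real k - real l\<bar> * \<bar>h * v$j\<bar> \<ge> 1 * (3*t)"
        using hv hpos t by (intro mult_mono) (auto simp: abs_mult)
      ultimately show False using t by (simp add: abs_mult)
    qed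
  qed
  have "measure lebesgue (\<Union>k\<in>{..N}. T k) = (\<Sum>k\<in>{..N}. measure lebesgue (T k))"
    apply (rule measure_finite_Union)
    apply simp
    using Tm apply blast
    apply (rule disj)
    using fmeasurableD2[OF Tm] apply (simp only: infinity_ennreal_def)
    apply simp
    done
  also have "\<dots> = (real N + 1) * measure lebesgue S" by (simp add: Tmeas)
  finally have eqU: "measure lebesgue (\<Union>k\<in>{..N}. T k) = (real N + 1) * measure lebesgue S" .
  have "measure lebesgue (\<Union>k\<in>{..N}. T k) \<le> measure lebesgue B"
    apply (rule measure_mono_fmeasurable)
    using TB apply blast
    apply (rule sets.finite_UN) using Tm apply auto[2]
    apply (simp add: B_def)
    done
  also have "\<dots> = (b+1-a)^CARD('n)" unfolding B_def by (rule cube_measure) (use ab in simp)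
  finally have U: "(real N + 1) * measure lebesgue S \<le> (b+1-a)^CARD('n)" using eqU by simp
  have m0: "measure lebesgue S \<ge> 0" by simp
  have "measure lebesgue S = (1/h) * measure lebesgue S * h" using hpos by simp
  also have "\<dots> \<le> ((real N + 1) * measure lebesgue S) * h"
    using N1 m0 hpos by (intro mult_right_mono) (auto intro: mult_right_mono)
  also have "\<dots> \<le> (b+1-a)^CARD('n) * h" using U hpos by (intro mult_right_mono) auto
  finally show ?thesis unfolding S_def h_def .
qed

lemma Iset_inner: "Iset a b v = {x \<in> cube a b. snd v + inner (fst v) x > 0}"
  by (simp add: Iset_def inner_vec_def mult.commute)

lemma diff_bound:
  fixes v w :: "(real^'n) \<times> real"
  assumes "norm x \<le> R0"
  shows "\<bar>(snd v + inner (fst v) x) - (snd w + inner (fst w) x)\<bar> \<le> norm (v - w) * (1 + R0)"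
proof -
  have "(snd v + inner (fst v) x) - (snd w + inner (fst w) x) = snd (v-w) + inner (fst (v-w)) x"
    by (simp add: inner_diff_left)
  also have "\<bar>\<dots>\<bar> \<le> \<bar>snd (v-w)\<bar> + norm (fst (v-w)) * norm x"
    using Cauchy_Schwarz_ineq2[of "fst (v-w)" x] by linarith
  also have "\<dots> \<le> norm (v-w) + norm (v-w) * R0"
  proof -
    have "\<bar>snd (v-w)\<bar> \<le> norm (v-w)" by (metis norm_snd_le prod.collapse real_norm_def)
    moreover have "norm (fst (v-w)) \<le> norm (v-w)" by (metis norm_fst_le prod.collapse)
    moreover have "norm (fst (v-w)) * norm x \<le> norm (v-w) * R0"
      using \<open>norm (fst (v-w)) \<le> norm (v-w)\<close> assms by (intro mult_mono) auto
    ultimately show ?thesis by linarith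
  qed
  finally show ?thesis by (simp add: algebra_simps)
qed

theorem lemma2p4:
  fixes a b :: real and p :: "real ^ 'n \<Rightarrow> real" and u :: "(real ^ 'n) \<times> real"
  assumes "a < b"
    and "p \<in> borel_measurable (lebesgue_on (cube a b))"
    and "\<And>x. x \<in> cube a b \<Longrightarrow> p x \<ge> 0"
    and "\<exists>M. \<forall>x \<in> cube a b. p x \<le> M"
    and "u \<noteq> 0"
  shows "\<exists>\<epsilon> C. \<epsilon> > 0 \<and> C > 0 \<and>
    (\<forall>v w. max (norm (u - v)) (norm (u - w)) \<le> \<epsilon> \<longrightarrow>
      (LINT x : symdiff (Iset a b v) (Iset a b w) | lebesgue. p x) \<le> C * norm (v - w))"
proof -
  obtain M0 where M0: "\<forall>x \<in> cube a b. p x \<le> M0" using assms(4) by blast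
  define M where "M = max M0 0"
  have M: "\<forall>x \<in> cube a b. p x \<le> M" "M \<ge> 0" using M0 by (auto simp: M_def)
  obtain R0 where R0: "\<forall>x \<in> (cube a b :: (real^'n) set). norm x \<le> R0"
    using bounded_cbox[of "(\<chi> i. a)::real^'n" "\<chi> i. b"] unfolding cube_def bounded_iff by blast
  define R where "R = 1 + max R0 0"
  have Rpos: "R > 0" by (simp add: R_def)
  have dif: "\<bar>(snd v + inner (fst v) x) - (snd w + inner (fst w) x)\<bar> \<le> norm (v - w) * R"
    if "x \<in> cube a b" for v w :: "(real^'n) \<times> real" and x
  proof -
    have "norm x \<le> max R0 0" using R0 that by force
    thus ?thesis unfolding R_def by (rule diff_bound)
  qed
  show ?thesis
  proof (cases "fst u = 0")
    case True
    hence su: "snd u \<noteq> 0" using assms(5) by (metis prod_eq_iff fst_zero snd_zero)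
    define \<epsilon> where "\<epsilon> = \<bar>snd u\<bar> / (2*R)"
    have epos: "\<epsilon> > 0" using su Rpos by (simp add: \<epsilon>_def)
    have same: "Iset a b v = Iset a b u" if "norm (u - v) \<le> \<epsilon>" for v
    proof -
      have "snd v + inner (fst v) x > 0 \<longleftrightarrow> snd u + inner (fst u) x > 0" if x: "x \<in> cube a b" for x
      proof -
        have "\<bar>(snd u + inner (fst u) x) - (snd v + inner (fst v) x)\<bar> \<le> norm (u - v) * R" by (rule dif[OF x])
        also have "\<dots> \<le> \<epsilon> * R" using \<open>norm (u - v) \<le> \<epsilon>\<close> Rpos by (simp add: mult_right_mono)
        also have "\<dots> = \<bar>snd u\<bar> / 2" using Rpos by (simp add: \<epsilon>_def)
        finally have hh: "\<bar>(snd u + inner (fst u) x) - (snd v + inner (fst v) x)\<bar> \<le> \<bar>snd u\<bar> / 2" .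
        have "inner (fst u) x = 0" using True by simp
        hence h2: "\<bar>snd u - (snd v + inner (fst v) x)\<bar> \<le> \<bar>snd u\<bar> / 2" using hh by simp
        have h3: "snd u - (snd v + inner (fst v) x) \<le> \<bar>snd u\<bar> / 2"
            "(snd v + inner (fst v) x) - snd u \<le> \<bar>snd u\<bar> / 2"
          using abs_le_D1[OF h2] abs_le_D2[OF h2] by linarith+
        show ?thesis
        proof (cases "snd u > 0")
          case True
          thus ?thesis using h3 \<open>inner (fst u) x = 0\<close> by (simp add: abs_of_pos)
        next
          case False
          hence "snd u < 0" using su by simp
          thus ?thesis using h3 \<open>inner (fst u) x = 0\<close> by (simp add: abs_of_neg)
        qed
      qed
      thus ?thesis unfolding Iset_inner by blast
    qed
    show ?thesis
    proof (intro exI conjI allI impI)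
      show "\<epsilon> > 0" by (rule epos)
      show "(1::real) > 0" by simp
      fix v w assume "max (norm (u - v)) (norm (u - w)) \<le> \<epsilon>"
      hence "Iset a b v = Iset a b w" using same by auto
      hence "symdiff (Iset a b v) (Iset a b w) = {}" by (simp add: symdiff_def)
      thus "(LINT x : symdiff (Iset a b v) (Iset a b w) | lebesgue. p x) \<le> 1 * norm (v - w)"
        by (simp add: set_lebesgue_integral_def)
    qed
  next
    case False
    then obtain j where j: "fst u $ j \<noteq> 0" by (metis vec_eq_iff zero_index)
    define c where "c = \<bar>fst u $ j\<bar> / 2"
    have cpos: "c > 0" using j by (simp add: c_def)
    have vj: "\<bar>fst v $ j\<bar> \<ge> c" if "norm (u - v) \<le> c" for v
    proof -
      have "\<bar>(fst u - fst v) $ j\<bar> \<le> norm (fst u - fst v)" by (rule component_le_norm_cart)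
      also have "\<dots> \<le> norm (u - v)" by (metis norm_fst_le prod.collapse fst_diff)
      finally show ?thesis using that unfolding c_def by simp
    qed
    define C where "C = (M+1) * (b+1-a)^CARD('n) * (3*R/c)"
    have Cpos: "C > 0" unfolding C_def using M(2) assms(1) Rpos cpos by simp
    show ?thesis
    proof (intro exI conjI allI impI)
      show "c > 0" by (rule cpos)
      show "C > 0" by (rule Cpos)
      fix v w assume vw: "max (norm (u - v)) (norm (u - w)) \<le> c"
      show "(LINT x : symdiff (Iset a b v) (Iset a b w) | lebesgue. p x) \<le> C * norm (v - w)"
      proof (cases "v = w")
        case True
        thus ?thesis by (simp add: symdiff_def set_lebesgue_integral_def)
      next
        case False
        define t where "t = norm (v - w) * R"
        have tpos: "t > 0" using False Rpos by (simp add: t_def)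
        define S where "S = {x \<in> cube a b. \<bar>snd v + inner (fst v) x\<bar> \<le> t}"
        have Sm: "S \<in> lmeasurable" unfolding S_def by (rule slab_lmeasurable)
        have sub: "symdiff (Iset a b v) (Iset a b w) \<subseteq> S"
        proof
          fix x assume x: "x \<in> symdiff (Iset a b v) (Iset a b w)"
          hence xc: "x \<in> cube a b" by (auto simp: symdiff_def Iset_def)
          have "\<bar>(snd v + inner (fst v) x) - (snd w + inner (fst w) x)\<bar> \<le> t"
            using dif[OF xc] by (simp add: t_def)
          thus "x \<in> S" using x xc unfolding S_def symdiff_def Iset_inner by auto
        qed
        have mS: "measure lebesgue S \<le> (b+1-a)^CARD('n) * (3*t/c)"
          unfolding S_def using vj[of v] vw cpos tpos assms(1) by (intro slab_measure) auto
        let ?A = "symdiff (Iset a b v) (Iset a b w)"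
        have "(LINT x : ?A | lebesgue. p x) \<le> M * measure lebesgue S"
        proof (cases "integrable lebesgue (\<lambda>x. indicator ?A x *\<^sub>R p x)")
          case True
          have "(LINT x : ?A | lebesgue. p x) \<le> integral\<^sup>L lebesgue (\<lambda>x. M * indicator S x)"
            unfolding set_lebesgue_integral_def
          proof (rule integral_mono[OF True])
            show "integrable lebesgue (\<lambda>x. M * indicator S x)"
              using Sm by (intro integrable_mult_right integrable_real_indicator) (auto simp: fmeasurable_def)
            fix x
            show "indicator ?A x *\<^sub>R p x \<le> M * indicator S x"
            proof (cases "x \<in> ?A")
              case True
              hence "x \<in> cube a b" "x \<in> S" using sub by (auto simp: symdiff_def Iset_def)
              thus ?thesis using True M by auto
            next
              case False thus ?thesis using M by (simp add: indicator_def)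
            qed
          qed
          also have "\<dots> = M * measure lebesgue S" using Sm by (simp add: fmeasurable_def)
          finally show ?thesis .
        next
          case False
          hence "(LINT x : ?A | lebesgue. p x) = 0"
            unfolding set_lebesgue_integral_def by (rule not_integrable_integral_eq)
          thus ?thesis using M by simp
        qed
        also have "\<dots> \<le> M * ((b+1-a)^CARD('n) * (3*t/c))" using mult_left_mono[OF mS M(2)] .
        also have "\<dots> \<le> (M+1) * ((b+1-a)^CARD('n) * (3*t/c))"
          using tpos cpos assms(1) by (intro mult_right_mono) auto
        also have "\<dots> = C * norm (v - w)" unfolding C_def t_def by (simp add: field_simps)
        finally show ?thesis .
      qed
    qed
  qed
qed
end
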